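(* Let $\mathcal I=(\Omega,\mathbb P,\mathcal S,\mathcal T,Y)$ be an information structure satisfying rectangle substitutes, and let $\epsilon>0$. Consider the protocol in which Alice sends $\mu_\sigma$ rounded to the nearest multiple of $\epsilon$ and Bob sends $\mu_\tau$ rounded to the nearest multiple of $\epsilon$ (each message depending only on the sender's own signal), after which the protocol terminates. This protocol uses $O(\log(1/\epsilon))$ bits of communication, and at its end Alice and Bob $2\epsilon^2$-agree and are each $\epsilon^2$-accurate.
   Context: An information structure is a tuple $\mathcal I=(\Omega,\mathbb P,\mathcal S,\mathcal T,Y)$: a probability space, random variables $\sigma:\Omega\to\mathcal S$ (Alice's signal), $\tau:\Omega\to\mathcal T$ (Bob's signal), $Y:\Omega\to[0,1]$. Notation: $\mu_{\sigma\tau}=\mathbb E[Y\mid\sigma,\tau]$, $\mu_\sigma=\mathbb E[Y\mid\sigma]$, $\mu_\tau=\mathbb E[Y\mid\tau]$; for measurable $S,T$: $\mu_{\sigma T}=\mathbb E[Y\mid\sigma,\tau\in T]$, $\mu_{S\tau}=\mathbb E[Y\mid\sigma\in S,\tau]$, $\mu_{ST}=\mathbb E[Y\mid\sigma\in S,\tau\in T]$; $\mathbb E[\cdot\mid S,T]$ conditions on $\{\sigma\in S,\tau\in T\}$. In a communication protocol, at termination the set of signal pairs consistent with the transcript is a rectangle $S\times T$; Alice's final expectation is $a=\mu_{\sigma T}$ and Bob's is $b=\mu_{S\tau}$. They $\epsilon$-agree if $\frac14\mathbb E[(a-b)^2]\le\epsilon$. Alice is $\epsilon$-accurate if $\mathbb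 E[(\mu_{\sigma\tau}-a)^2]\le\epsilon$; likewise Bob with $b$. $\mathcal I$ satisfies rectangle substitutes if for all measurable $S\subseteq\mathcal S$, $T\subseteq\mathcal T$ with $\mathbb P(\sigma\in S,\tau\in T)>0$: $\mathbb E[(Y-\mu_{S\tau})^2\mid S,T]-\mathbb E[(Y-\mu_{\sigma\tau})^2\mid S,T]\le \mathbb E[(Y-\mu_{ST})^2\mid S,T]-\mathbb E[(Y-\mu_{\sigma T})^2\mid S,T]$. *)

theory Defs
  imports "HOL-Probability.Probability"
begin

definition gen1 :: "'w measure \<Rightarrow> ('w \<Rightarrow> 'a) \<Rightarrow> 'a measure \<Rightarrow> 'w measure" where
  "gen1 M f A = vimage_algebra (space M) f A"

definition gen2 :: "'w measure \<Rightarrow> ('w \<Rightarrow> 'a) \<Rightarrow> 'a measure \<Rightarrow> ('w \<Rightarrow> 'b) \<Rightarrow> 'b measure \<Rightarrow> 'w measure" where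
  "gen2 M f A g B = vimage_algebra (space M) (\<lambda>w. (f w, g w)) (A \<Otimes>\<^sub>M B)"

definition condE :: "'w measure \<Rightarrow> 'w set \<Rightarrow> ('w \<Rightarrow> real) \<Rightarrow> real" where
  "condE M E f = (\<integral>w. indicator E w * f w \<partial>M) / measure M E"

definition info_structure ::
  "'w measure \<Rightarrow> 's measure \<Rightarrow> 't measure \<Rightarrow> ('w \<Rightarrow> 's) \<Rightarrow> ('w \<Rightarrow> 't) \<Rightarrow> ('w \<Rightarrow> real) \<Rightarrow> bool" where
  "info_structure M SS TT sig tau Y \<longleftrightarrow>
     prob_space M \<and> sig \<in> M \<rightarrow>\<^sub>M SS \<and> tau \<in> M \<rightarrow>\<^sub>M TT \<and> Y \<in> borel_measurable M \<and>
     (\<forall>w\<in>space M. 0 \<le> Y w \<and> Y w \<le> 1)"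

definition mu_st where
  "mu_st M SS TT sig tau Y = real_cond_exp M (gen2 M sig SS tau TT) Y"

definition mu_s where
  "mu_s M SS sig Y = real_cond_exp M (gen1 M sig SS) Y"

definition mu_t where
  "mu_t M TT tau Y = real_cond_exp M (gen1 M tau TT) Y"

text \<open>For measurable S, T: mu_{sigma T} = E[Y | sigma, 1(tau in T)], which on the event
  {tau in T} is E[Y | sigma, tau in T]; similarly mu_{S tau}; mu_{ST} = E[Y | sigma in S, tau in T].\<close>
definition mu_sT where
  "mu_sT M SS sig tau Y T =
     real_cond_exp M (gen2 M sig SS (\<lambda>w. tau w \<in> T) (count_space UNIV)) Y"

definition mu_St where
  "mu_St M TT sig tau Y S =
     real_cond_exp M (gen2 M (\<lambda>w. sig w \<in> S) (count_space UNIV) tau TT) Y"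

definition rect_event where
  "rect_event M sig tau S T = {w \<in> space M. sig w \<in> S \<and> tau w \<in> T}"

definition mu_ST where
  "mu_ST M sig tau Y S T = condE M (rect_event M sig tau S T) Y"

definition rectangle_substitutes ::
  "'w measure \<Rightarrow> 's measure \<Rightarrow> 't measure \<Rightarrow> ('w \<Rightarrow> 's) \<Rightarrow> ('w \<Rightarrow> 't) \<Rightarrow> ('w \<Rightarrow> real) \<Rightarrow> bool" where
  "rectangle_substitutes M SS TT sig tau Y \<longleftrightarrow>
     (\<forall>S \<in> sets SS. \<forall>T \<in> sets TT.
        measure M (rect_event M sig tau S T) > 0 \<longrightarrow>
          (let E = rect_event M sig tau S T in
             condE M E (\<lambda>w. (Y w - mu_St M TT sig tau Y S w)\<^sup>2)
             - condE M E (\<lambda>w. (Y w - mu_st M SS TT sig tau Y w)\<^sup>2)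
           \<le> condE M E (\<lambda>w. (Y w - mu_ST M sig tau Y S T)\<^sup>2)
             - condE M E (\<lambda>w. (Y w - mu_sT M SS sig tau Y T w)\<^sup>2)))"

text \<open>The protocol: Alice sends mu_sigma rounded to the nearest multiple of eps,
  Bob sends mu_tau rounded likewise (each a function of the sender's own signal,
  being measurable w.r.t. the sender's sigma algebra); then it terminates.\<close>
definition round_to :: "real \<Rightarrow> real \<Rightarrow> real" where
  "round_to eps x = eps * of_int (round (x / eps))"

definition msgA where
  "msgA M SS sig Y eps = (\<lambda>w. round_to eps (mu_s M SS sig Y w))"

definition msgB where
  "msgB M TT tau Y eps = (\<lambda>w. round_to eps (mu_t M TT tau Y w))"

text \<open>Final expectations: Alice's a = mu_{sigma T} where T is the set of Bob's signals
  consistent with Bob's message, i.e. a = E[Y | sigma, Bob's message]; symmetrically b.\<close>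
definition final_a where
  "final_a M SS TT sig tau Y eps =
     real_cond_exp M (gen2 M sig SS (msgB M TT tau Y eps) borel) Y"

definition final_b where
  "final_b M SS TT sig tau Y eps =
     real_cond_exp M (gen2 M (msgA M SS sig Y eps) borel tau TT) Y"

end

theory Submission
  imports Defs
begin


lemma round_to_meas[measurable]: "(\<lambda>x. round_to eps x) \<in> borel_measurable borel"
  unfolding round_to_def round_def by measurable

lemma round_to_err: "eps > 0 \<Longrightarrow> \<bar>x - round_to eps x\<bar> \<le> eps / 2"
proof -
  assume e: "eps > 0"
  have "\<bar>of_int (round (x/eps)) - x/eps\<bar> \<le> 1/2" by (rule of_int_round_abs_le)
  then have "\<bar>eps * of_int (round (x/eps)) - eps * (x/eps)\<bar> \<le> eps * (1/2)"
    using e by (metis abs_mult abs_of_pos mult_left_mono right_diff_distrib less_imp_le)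
  then show ?thesis using e by (simp add: round_to_def abs_minus_commute)
qed

lemma subalg_vimage:
  assumes "f \<in> measurable M N"
  shows "subalgebra M (vimage_algebra (space M) f N)"
  unfolding subalgebra_def using sets_image_in_sets[OF refl assms] by simp

lemma subalg_vimage2:
  assumes "f \<in> measurable F N" "space F = space M"
  shows "subalgebra F (vimage_algebra (space M) f N)"
  unfolding subalgebra_def using sets_image_in_sets[OF assms(2) assms(1)] assms(2) by simp

lemma subalg_trans: "subalgebra M F \<Longrightarrow> subalgebra F G \<Longrightarrow> subalgebra M G"
  unfolding subalgebra_def by auto

lemma sfs: "prob_space M \<Longrightarrow> subalgebra M F \<Longrightarrow> sigma_finite_subalgebra M F"
  apply (rule finite_measure_subalgebra_is_sigma_finite)
  unfolding finite_measure_subalgebra_def finite_measure_subalgebra_axioms_def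
  by (auto simp: prob_space_def)

lemma int_bdd:
  fixes f :: "'a \<Rightarrow> real"
  assumes "prob_space M" "f \<in> borel_measurable M" "AE x in M. \<bar>f x\<bar> \<le> C"
  shows "integrable M f"
  using finite_measure.integrable_const_bound[of M f C] assms
  by (auto simp: prob_space_def)

lemma ce_bdd:
  assumes "prob_space M" "subalgebra M F" "Y \<in> borel_measurable M" "\<forall>w\<in>space M. 0 \<le> Y w \<and> Y w \<le> 1"
  shows "AE w in M. 0 \<le> real_cond_exp M F Y w \<and> real_cond_exp M F Y w \<le> 1"
proof -
  interpret sigma_finite_subalgebra M F using sfs assms by blast
  have i: "integrable M Y" using int_bdd[OF assms(1,3), of 1] assms(4) by auto
  have "AE w in M. 0 \<le> real_cond_exp M F Y w"
    by (rule real_cond_exp_ge_c[OF i]) (use assms(4) in auto)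
  moreover have "AE w in M. real_cond_exp M F Y w \<le> 1"
    by (rule real_cond_exp_le_c[OF i]) (use assms(4) in auto)
  ultimately show ?thesis by auto
qed



lemma abs_mult_le: "\<bar>a::real\<bar> \<le> A \<Longrightarrow> \<bar>b\<bar> \<le> B \<Longrightarrow> \<bar>a * b\<bar> \<le> A * B"
  by (simp add: abs_mult mult_mono')

lemma pyth:
  fixes Y g :: "'a \<Rightarrow> real"
  assumes P: "prob_space M" and S: "subalgebra M F"
    and Ym: "Y \<in> borel_measurable M" and Yb: "\<forall>w\<in>space M. 0 \<le> Y w \<and> Y w \<le> 1"
    and gm: "g \<in> borel_measurable F" and gb: "AE w in M. \<bar>g w\<bar> \<le> C"
  shows "integrable M (\<lambda>w. (Y w - g w)\<^sup>2)"
    "(\<integral>w. (Y w - g w)\<^sup>2 \<partial>M) = (\<integral>w. (Y w - real_cond_exp M F Y w)\<^sup>2 \<partial>M)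
        + (\<integral>w. (real_cond_exp M F Y w - g w)\<^sup>2 \<partial>M)"
proof -
  interpret sigma_finite_subalgebra M F using sfs P S by blast
  define c where "c = real_cond_exp M F Y"
  have cF: "c \<in> borel_measurable F" unfolding c_def by simp
  have cM: "c \<in> borel_measurable M" unfolding c_def by simp
  have gM: "g \<in> borel_measurable M" using measurable_from_subalg[OF S gm] .
  have cb: "AE w in M. 0 \<le> c w \<and> c w \<le> 1" unfolding c_def using ce_bdd[OF P S Ym Yb] .
  have Yb': "AE w in M. 0 \<le> Y w \<and> Y w \<le> 1" using Yb by auto
  define h where "h = (\<lambda>w. c w - g w)"
  have hF: "h \<in> borel_measurable F" unfolding h_def using cF gm by measurable
  have hM: "h \<in> borel_measurable M" unfolding h_def using cM gM by measurable
  have AEb: "AE w in M. \<bar>Y w\<bar> \<le> 1 \<and> \<bar>c w\<bar> \<le> 1 \<and> \<bar>g w\<bar> \<le> C \<and> \<bar>h w\<bar> \<le> 1 + C 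
     \<and> \<bar>Y w - c w\<bar> \<le> 2 \<and> \<bar>Y w - g w\<bar> \<le> 1 + C"
    using cb gb Yb' unfolding h_def by eventually_elim auto
  have i1: "integrable M (\<lambda>w. h w * Y w)"
    apply (rule int_bdd[OF P _, of _ "(1 + C) * 1"]) using hM Ym apply measurable
    using AEb by eventually_elim (rule abs_mult_le, auto)
  have i2: "integrable M (\<lambda>w. h w * c w)"
    apply (rule int_bdd[OF P _, of _ "(1 + C) * 1"]) using hM cM apply measurable
    using AEb by eventually_elim (rule abs_mult_le, auto)
  have i3: "integrable M (\<lambda>w. (Y w - c w)\<^sup>2)"
    apply (rule int_bdd[OF P _, of _ "2 * 2"]) using Ym cM apply measurable
    using AEb by eventually_elim (unfold power2_eq_square, rule abs_mult_le, auto)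
  have i4: "integrable M (\<lambda>w. (h w)\<^sup>2)"
    apply (rule int_bdd[OF P _, of _ "(1+C) * (1+C)"]) using hM apply measurable
    using AEb by eventually_elim (unfold power2_eq_square, rule abs_mult_le, auto)
  show "integrable M (\<lambda>w. (Y w - g w)\<^sup>2)"
    apply (rule int_bdd[OF P _, of _ "(1+C) * (1+C)"]) using Ym gM apply measurable
    using AEb by eventually_elim (unfold power2_eq_square, rule abs_mult_le, auto)
  have e: "(\<integral>w. h w * c w \<partial>M) = (\<integral>w. h w * Y w \<partial>M)"
    using real_cond_exp_intg(2)[OF i1 hF Ym] unfolding c_def .
  have pt: "\<And>w. (Y w - g w)\<^sup>2 = (Y w - c w)\<^sup>2 + 2 * (h w * Y w - h w * c w) + (h w)\<^sup>2"
    unfolding h_def by (simp add: power2_eq_square algebra_simps)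
  have "(\<integral>w. (Y w - g w)\<^sup>2 \<partial>M) = (\<integral>w. (Y w - c w)\<^sup>2 + 2 * (h w * Y w - h w * c w) + (h w)\<^sup>2 \<partial>M)"
    by (simp only: pt)
  also have "\<dots> = (\<integral>w. (Y w - c w)\<^sup>2 \<partial>M) + 2 * ((\<integral>w. h w * Y w \<partial>M) - (\<integral>w. h w * c w \<partial>M)) + (\<integral>w. (h w)\<^sup>2 \<partial>M)"
    using i1 i2 i3 i4 by simp
  also have "\<dots> = (\<integral>w. (Y w - c w)\<^sup>2 \<partial>M) + (\<integral>w. (h w)\<^sup>2 \<partial>M)" using e by simp
  finally show "(\<integral>w. (Y w - g w)\<^sup>2 \<partial>M) = (\<integral>w. (Y w - real_cond_exp M F Y w)\<^sup>2 \<partial>M)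
        + (\<integral>w. (real_cond_exp M F Y w - g w)\<^sup>2 \<partial>M)" unfolding c_def h_def .
qed



lemma sum_cells:
  fixes f m :: "'a \<Rightarrow> real"
  assumes P: "prob_space M" and R: "finite R" and mm: "m \<in> borel_measurable M"
    and mR: "AE w in M. m w \<in> R" and fi: "integrable M f"
  shows "(\<integral>w. f w \<partial>M) = (\<Sum>r\<in>R. \<integral>w. indicator {w\<in>space M. m w = r} w * f w \<partial>M)"
proof -
  have Es: "{w\<in>space M. m w = r} \<in> sets M" for r using mm by measurable
  have "(\<integral>w. f w \<partial>M) = (\<integral>w. (\<Sum>r\<in>R. indicator {w\<in>space M. m w = r} w * f w) \<partial>M)"
  proof (rule integral_cong_AE)
    show "f \<in> borel_measurable M" using fi by auto
    show "(\<lambda>w. \<Sum>r\<in>R. indicator {w \<in> space M. m w = r} w * f w) \<in> borel_measurable M"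
      using mm fi by measurable
    show "AE w in M. f w = (\<Sum>r\<in>R. indicator {w \<in> space M. m w = r} w * f w)"
      using mR AE_space
    proof eventually_elim
      case (elim w)
      then have "(\<Sum>r\<in>R. indicator {w \<in> space M. m w = r} w * f w) = (\<Sum>r\<in>R. if m w = r then f w else 0)"
        by (intro sum.cong) (auto simp: indicator_def)
      also have "\<dots> = f w" using elim R by (simp add: sum.delta)
      finally show ?case by simp
    qed
  qed
  also have "\<dots> = (\<Sum>r\<in>R. \<integral>w. indicator {w\<in>space M. m w = r} w * f w \<partial>M)"
  proof (rule Bochner_Integration.integral_sum)
    fix r show "integrable M (\<lambda>w. indicator {w\<in>space M. m w = r} w * f w)"
      using integrable_real_mult_indicator[OF Es fi] by (simp add: mult.commute)
  qed
  finally show ?thesis .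
qed



lemma cell_ineq:
  fixes Y m f1 f2 f4 :: "'a \<Rightarrow> real"
  assumes P: "prob_space M" and E: "E \<in> sets M" and mE: "\<forall>w\<in>E. m w = r"
    and Ym: "Y \<in> borel_measurable M" and Yb: "\<forall>w\<in>space M. 0 \<le> Y w \<and> Y w \<le> 1"
    and i1: "integrable M f1" and i2: "integrable M f2" and i4: "integrable M f4"
    and hyp: "measure M E > 0 \<Longrightarrow> condE M E f1 - condE M E f2
        \<le> condE M E (\<lambda>w. (Y w - condE M E Y)\<^sup>2) - condE M E f4"
  shows "(\<integral>w. indicator E w * f1 w \<partial>M) - (\<integral>w. indicator E w * f2 w \<partial>M)
     \<le> (\<integral>w. indicator E w * (Y w - m w)\<^sup>2 \<partial>M) - (\<integral>w. indicator E w * f4 w \<partial>M)"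
proof -
  interpret prob_space M by (rule P)
  have iY: "integrable M Y" using int_bdd[OF P Ym, of 1] Yb by auto
  have iI: "integrable M (\<lambda>w. indicator E w * g w)" if "integrable M g" for g :: "'a \<Rightarrow> real"
    using integrable_real_mult_indicator[OF E that] by (simp add: mult.commute)
  have iconst: "integrable M (\<lambda>w. (c::real))" for c by simp
  have eqm: "(\<integral>w. indicator E w * (Y w - m w)\<^sup>2 \<partial>M) = (\<integral>w. indicator E w * (Y w - r)\<^sup>2 \<partial>M)"
    using mE by (intro Bochner_Integration.integral_cong) (auto simp: indicator_def)
  show ?thesis
  proof (cases "measure M E > 0")
    case False
    then have "measure M E = 0" using measure_nonneg[of M E] by linarith
    then have "E \<in> null_sets M" using E by (simp add: emeasure_eq_measure null_sets_def)
    then have ae: "AE w in M. indicator E w = (0::real)" using AE_not_in by (auto simp: indicator_def)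
    have z: "(\<integral>w. indicator E w * g w \<partial>M) = 0" for g :: "'a \<Rightarrow> real"
      by (rule integral_eq_zero_AE) (use ae in \<open>eventually_elim, auto\<close>)
    show ?thesis by (simp only: z)
  next
    case True
    define p where "p = measure M E"
    define I where "I g = (\<integral>w. indicator E w * g w \<partial>M)" for g :: "'a \<Rightarrow> real"
    have cE: "condE M E g = I g / p" for g unfolding condE_def I_def p_def ..
    define c where "c = condE M E Y"
    have pp: "p > 0" using True p_def by simp
    have h: "I f1 / p - I f2 / p \<le> I (\<lambda>w. (Y w - c)\<^sup>2) / p - I f4 / p"
      using hyp[OF True] unfolding cE c_def .
    then have h2: "I f1 - I f2 \<le> I (\<lambda>w. (Y w - c)\<^sup>2) - I f4"
      using pp by (simp add: diff_divide_distrib[symmetric] divide_le_cancel)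
    have Ip: "I (\<lambda>w. 1) = p" unfolding I_def p_def using E by simp
    have IY: "I Y = c * p" unfolding c_def cE using pp by simp
    have pt: "indicator E w * (Y w - r)\<^sup>2 = indicator E w * (Y w - c)\<^sup>2 + 2 * (c - r) * (indicator E w * Y w)
       - 2 * (c - r) * c * (indicator E w * 1) + (c - r)\<^sup>2 * (indicator E w * 1)" for w
      by (simp add: power2_eq_square algebra_simps)
    have iYc: "integrable M (\<lambda>w. (Y w - c)\<^sup>2)"
      apply (rule int_bdd[OF P, of _ "(1 + \<bar>c\<bar>)\<^sup>2"]) using Ym apply measurable
      using Yb by (auto intro!: AE_I2 simp: abs_le_square_iff[symmetric])
    have "I (\<lambda>w. (Y w - r)\<^sup>2) = I (\<lambda>w. (Y w - c)\<^sup>2) + 2 * (c - r) * I Y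
       - 2 * (c - r) * c * I (\<lambda>w. 1) + (c - r)\<^sup>2 * I (\<lambda>w. 1)"
      unfolding I_def pt using iI[OF iYc] iI[OF iY] iI[OF iconst[of 1]] by simp
    also have "\<dots> = I (\<lambda>w. (Y w - c)\<^sup>2) + (c - r)\<^sup>2 * p" unfolding IY Ip by (simp add: algebra_simps)
    finally have "I (\<lambda>w. (Y w - c)\<^sup>2) \<le> I (\<lambda>w. (Y w - r)\<^sup>2)" using pp by simp
    then show ?thesis using h2 eqm unfolding I_def by linarith
  qed
qed



lemma side:
  fixes Y A m :: "'a \<Rightarrow> real" and \<nu> :: "real \<Rightarrow> 'a \<Rightarrow> real"
  assumes P: "prob_space M" and Ym: "Y \<in> borel_measurable M" and Yb: "\<forall>w\<in>space M. 0 \<le> Y w \<and> Y w \<le> 1"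
    and eps: "eps > 0"
    and Fst: "subalgebra M Fst" and Fo: "subalgebra M Fo" and Ga: "subalgebra M Ga"
    and GaFst: "subalgebra Fst Ga"
    and mdef: "m = (\<lambda>w. round_to eps (real_cond_exp M Fo Y w))"
    and mGa: "m \<in> borel_measurable Ga"
    and Am: "A \<in> borel_measurable Fo" and Ab: "AE w in M. \<bar>A w\<bar> \<le> 1"
    and R: "finite R" and mR: "AE w in M. m w \<in> R"
    and \<nu>m: "\<And>r. r \<in> R \<Longrightarrow> \<nu> r \<in> borel_measurable Ga"
    and \<nu>b: "\<And>r. r \<in> R \<Longrightarrow> AE w in M. \<bar>\<nu> r w\<bar> \<le> 1"
    and hyp: "\<And>r. r \<in> R \<Longrightarrow> measure M {w\<in>space M. m w = r} > 0 \<Longrightarrow>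
       condE M {w\<in>space M. m w = r} (\<lambda>w. (Y w - A w)\<^sup>2)
       - condE M {w\<in>space M. m w = r} (\<lambda>w. (Y w - real_cond_exp M Fst Y w)\<^sup>2)
       \<le> condE M {w\<in>space M. m w = r} (\<lambda>w. (Y w - condE M {w\<in>space M. m w = r} Y)\<^sup>2)
       - condE M {w\<in>space M. m w = r} (\<lambda>w. (Y w - \<nu> r w)\<^sup>2)"
  shows "(\<integral>w. (real_cond_exp M Fst Y w - real_cond_exp M Ga Y w)\<^sup>2 \<partial>M) \<le> eps\<^sup>2 / 4"
proof -
  define \<mu> where "\<mu> = real_cond_exp M Fst Y"
  define a where "a = real_cond_exp M Ga Y"
  define \<mu>o where "\<mu>o = real_cond_exp M Fo Y"
  define E where "E r = {w\<in>space M. m w = r}" for r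
  have aFst: "a \<in> borel_measurable Fst" unfolding a_def
    by (rule measurable_from_subalg[OF GaFst]) simp
  have ab: "AE w in M. \<bar>a w\<bar> \<le> 1" unfolding a_def using ce_bdd[OF P Ga Ym Yb] by eventually_elim auto
  have \<mu>b: "AE w in M. \<bar>\<mu> w\<bar> \<le> 1" unfolding \<mu>_def using ce_bdd[OF P Fst Ym Yb] by eventually_elim auto
  have \<mu>ob: "AE w in M. \<bar>\<mu>o w\<bar> \<le> 1" unfolding \<mu>o_def using ce_bdd[OF P Fo Ym Yb] by eventually_elim auto
  have mFo: "m \<in> borel_measurable Fo" unfolding mdef by measurable
  have mM: "m \<in> borel_measurable M" using measurable_from_subalg[OF Fo mFo] .
  have merr: "\<bar>\<mu>o w - m w\<bar> \<le> eps / 2" for w unfolding mdef \<mu>o_def using round_to_err[OF eps] .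
  have mb: "AE w in M. \<bar>m w\<bar> \<le> 1 + eps" using \<mu>ob
  proof eventually_elim
    case (elim w) then show ?case using merr[of w] eps by linarith
  qed
  have EGa: "E r \<in> sets Ga" for r
  proof -
    have "{w\<in>space Ga. m w = r} \<in> sets Ga" using mGa by measurable
    moreover have "space Ga = space M" using Ga unfolding subalgebra_def by simp
    ultimately show ?thesis unfolding E_def by simp
  qed
  have EM: "E r \<in> sets M" for r unfolding E_def using mM by measurable
  define a' where "a' w = (\<Sum>r\<in>R. indicator (E r) w * \<nu> r w)" for w
  have a'Ga: "a' \<in> borel_measurable Ga" unfolding a'_def
    using \<nu>m EGa by measurable
  have a'val: "a' w = \<nu> r w" if "w \<in> E r" "r \<in> R" for w r
  proof -
    have "a' w = (\<Sum>r'\<in>R. if r' = r then \<nu> r' w else 0)"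
      unfolding a'_def using that by (intro sum.cong) (auto simp: E_def indicator_def)
    also have "\<dots> = \<nu> r w" using that R by (simp add: sum.delta)
    finally show ?thesis .
  qed
  have \<nu>b': "AE w in M. \<forall>r\<in>R. \<bar>\<nu> r w\<bar> \<le> 1"
    by (rule AE_finite_allI[OF R]) (rule \<nu>b)
  have a'b: "AE w in M. \<bar>a' w\<bar> \<le> 1"
    using mR \<nu>b' AE_space
  proof eventually_elim
    case (elim w)
    then have "w \<in> E (m w)" unfolding E_def by simp
    then show ?case using a'val[of w "m w"] elim by auto
  qed
  have \<mu>Fst: "\<mu> \<in> borel_measurable Fst" unfolding \<mu>_def by simp
  note py1 = pyth[OF P Fst Ym Yb aFst ab]
  note py2 = pyth[OF P Ga Ym Yb a'Ga a'b]
  note py3 = pyth[OF P Fo Ym Yb Am Ab]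
  note py4 = pyth[OF P Fo Ym Yb mFo mb]
  note py5 = pyth[OF P Fst Ym Yb \<mu>Fst \<mu>b]
  have i\<nu>: "integrable M (\<lambda>w. (Y w - \<nu> r w)\<^sup>2)" if "r \<in> R" for r
    using pyth(1)[OF P Ga Ym Yb \<nu>m[OF that] \<nu>b[OF that]] .
  have cells: "(\<integral>w. (Y w - A w)\<^sup>2 \<partial>M) - (\<integral>w. (Y w - \<mu> w)\<^sup>2 \<partial>M)
      \<le> (\<integral>w. (Y w - m w)\<^sup>2 \<partial>M) - (\<integral>w. (Y w - a' w)\<^sup>2 \<partial>M)"
  proof -
    have s: "\<And>f::'a \<Rightarrow> real. integrable M f \<Longrightarrow> (\<integral>w. f w \<partial>M) = (\<Sum>r\<in>R. \<integral>w. indicator (E r) w * f w \<partial>M)"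
      unfolding E_def by (rule sum_cells[OF P R mM mR])
    have a'cell: "(\<integral>w. indicator (E r) w * (Y w - a' w)\<^sup>2 \<partial>M) = (\<integral>w. indicator (E r) w * (Y w - \<nu> r w)\<^sup>2 \<partial>M)"
      if "r \<in> R" for r
      using a'val[OF _ that] by (intro Bochner_Integration.integral_cong) (auto simp: indicator_def)
    have per: "(\<integral>w. indicator (E r) w * (Y w - A w)\<^sup>2 \<partial>M) - (\<integral>w. indicator (E r) w * (Y w - \<mu> w)\<^sup>2 \<partial>M)
      \<le> (\<integral>w. indicator (E r) w * (Y w - m w)\<^sup>2 \<partial>M) - (\<integral>w. indicator (E r) w * (Y w - \<nu> r w)\<^sup>2 \<partial>M)"
      if r: "r \<in> R" for r
      apply (rule cell_ineq[where r=r, OF P EM _ Ym Yb py3(1) py5(1) i\<nu>[OF r]])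
       apply (simp add: E_def)
      using hyp[OF r] unfolding E_def \<mu>_def by simp
    have "(\<integral>w. (Y w - A w)\<^sup>2 \<partial>M) - (\<integral>w. (Y w - \<mu> w)\<^sup>2 \<partial>M)
       = (\<Sum>r\<in>R. (\<integral>w. indicator (E r) w * (Y w - A w)\<^sup>2 \<partial>M) - (\<integral>w. indicator (E r) w * (Y w - \<mu> w)\<^sup>2 \<partial>M))"
      using s[OF py3(1)] s[OF py5(1)] by (simp add: sum_subtractf)
    also have "\<dots> \<le> (\<Sum>r\<in>R. (\<integral>w. indicator (E r) w * (Y w - m w)\<^sup>2 \<partial>M) - (\<integral>w. indicator (E r) w * (Y w - a' w)\<^sup>2 \<partial>M))"
      using per a'cell by (intro sum_mono) simp
    also have "\<dots> = (\<integral>w. (Y w - m w)\<^sup>2 \<partial>M) - (\<integral>w. (Y w - a' w)\<^sup>2 \<partial>M)"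
      using s[OF py4(1)] s[OF py2(1)] by (simp add: sum_subtractf)
    finally show ?thesis .
  qed
  have err: "(\<integral>w. (\<mu>o w - m w)\<^sup>2 \<partial>M) \<le> eps\<^sup>2 / 4"
  proof -
    interpret prob_space M by (rule P)
    have "(\<integral>w. (\<mu>o w - m w)\<^sup>2 \<partial>M) \<le> (\<integral>w. (eps/2)\<^sup>2 \<partial>M)"
    proof (rule integral_mono)
      show "integrable M (\<lambda>w. (\<mu>o w - m w)\<^sup>2)"
      proof (rule int_bdd[OF P, of _ "(eps/2)\<^sup>2"])
        show "(\<lambda>w. (\<mu>o w - m w)\<^sup>2) \<in> borel_measurable M" unfolding \<mu>o_def using mM by measurable
        show "AE w in M. \<bar>(\<mu>o w - m w)\<^sup>2\<bar> \<le> (eps / 2)\<^sup>2"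
          using merr eps by (intro AE_I2) (simp add: abs_le_square_iff[symmetric])
      qed
      show "integrable M (\<lambda>w. (eps/2)\<^sup>2)" by simp
      show "(\<mu>o w - m w)\<^sup>2 \<le> (eps / 2)\<^sup>2" for w using merr[of w] by (simp add: abs_le_square_iff[symmetric])
    qed
    then show ?thesis by (simp add: power_divide prob_space)
  qed
  have nn1: "0 \<le> (\<integral>w. (a w - a' w)\<^sup>2 \<partial>M)" by simp
  have nn2: "0 \<le> (\<integral>w. (\<mu>o w - A w)\<^sup>2 \<partial>M)" by simp
  show ?thesis
    using py1(2) py2(2) py3(2) py4(2) cells err nn1 nn2
    unfolding a_def[symmetric] \<mu>_def[symmetric] \<mu>o_def[symmetric] by linarith
qed



lemma card_bound:
  assumes eps: "eps > 0"
  shows "real (card ((\<lambda>k. eps * of_int k) ` {0..round (1/eps)})) \<le> 1 / eps + 2"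
    "card ((\<lambda>k. eps * of_int k) ` {0..round (1/eps)}) \<ge> 1"
proof -
  have "card ((\<lambda>k. eps * of_int k) ` {0..round (1/eps)}) \<le> card {0..round (1/eps)}"
    by (rule card_image_le) simp
  also have "\<dots> = nat (round (1/eps) + 1)" by simp
  finally have c: "real (card ((\<lambda>k. eps * of_int k) ` {0..round (1/eps)})) \<le> real (nat (round (1/eps) + 1))"
    by linarith
  have r0: "round (1/eps) \<ge> 0" using round_mono[of 0 "1/eps"] eps by simp
  have "real_of_int (round (1/eps)) \<le> 1/eps + 1/2" by (rule of_int_round_le)
  then show "real (card ((\<lambda>k. eps * of_int k) ` {0..round (1/eps)})) \<le> 1 / eps + 2"
    using c r0 by simp
  have "0 \<in> {0..round (1/eps)}" using r0 by simp
  then have "(\<lambda>k. eps * of_int k) ` {0..round (1/eps)} \<noteq> {}" by blast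
  then show "card ((\<lambda>k. eps * of_int k) ` {0..round (1/eps)}) \<ge> 1"
    by (simp add: Suc_le_eq card_gt_0_iff)
qed

lemma round_in:
  assumes eps: "eps > 0" and "0 \<le> x" "x \<le> 1"
  shows "round_to eps x \<in> (\<lambda>k. eps * of_int k) ` {0..round (1/eps)}"
proof -
  have "round (x/eps) \<ge> 0" using round_mono[of 0 "x/eps"] assms by simp
  moreover have "round (x/eps) \<le> round (1/eps)" using assms by (intro round_mono divide_right_mono) auto
  ultimately show ?thesis unfolding round_to_def by auto
qed

lemma log_bound:
  assumes eps: "eps > 0" and c: "real c \<le> 1 / eps + 2" "c \<ge> 1"
  shows "real_of_int \<lceil>log 2 (real c)\<rceil> \<le> log 2 (1 / eps + 2) + 1"
proof -
  have "log 2 (real c) \<le> log 2 (1 / eps + 2)" using c by (subst log_le_cancel_iff) auto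
  moreover have "real_of_int \<lceil>log 2 (real c)\<rceil> < log 2 (real c) + 1" by linarith
  ultimately show ?thesis by linarith
qed



lemma cell_set:
  fixes m :: "'a \<Rightarrow> real"
  assumes "m \<in> borel_measurable (vimage_algebra (space M) f N)" "f \<in> measurable M N"
  shows "\<exists>T. T \<in> sets N \<and> {w\<in>space M. m w = r} = f -` T \<inter> space M"
proof -
  have "m -` {r} \<inter> space (vimage_algebra (space M) f N) \<in> sets (vimage_algebra (space M) f N)"
    by (rule measurable_sets[OF assms(1)]) (rule borel_closed, simp)
  moreover have "m -` {r} \<inter> space (vimage_algebra (space M) f N) = {w\<in>space M. m w = r}" by auto
  ultimately have "{w\<in>space M. m w = r} \<in> sets (vimage_algebra (space M) f N)" by simp
  moreover have "f \<in> space M \<rightarrow> space N" using assms(2) by (simp add: measurable_def)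
  ultimately show ?thesis by (auto simp: sets_vimage_algebra2)
qed

theorem propositionB1:
  fixes M :: "'w measure" and SS :: "'s measure" and TT :: "'t measure"
    and sig :: "'w \<Rightarrow> 's" and tau :: "'w \<Rightarrow> 't" and Y :: "'w \<Rightarrow> real" and eps :: real
  assumes "info_structure M SS TT sig tau Y"
    and "rectangle_substitutes M SS TT sig tau Y"
    and "eps > 0"
  shows
    "(\<exists>RA RB. finite RA \<and> finite RB
        \<and> real (card RA) \<le> 1 / eps + 2 \<and> real (card RB) \<le> 1 / eps + 2
        \<and> (AE w in M. msgA M SS sig Y eps w \<in> RA \<and> msgB M TT tau Y eps w \<in> RB)
        \<and> real_of_int (\<lceil>log 2 (real (card RA))\<rceil> + \<lceil>log 2 (real (card RB))\<rceil>)
            \<le> 2 * log 2 (1 / eps + 2) + 2)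
     \<and> (1/4) * (\<integral>w. (final_a M SS TT sig tau Y eps w - final_b M SS TT sig tau Y eps w)\<^sup>2 \<partial>M)
         \<le> 2 * eps\<^sup>2
     \<and> (\<integral>w. (mu_st M SS TT sig tau Y w - final_a M SS TT sig tau Y eps w)\<^sup>2 \<partial>M) \<le> eps\<^sup>2
     \<and> (\<integral>w. (mu_st M SS TT sig tau Y w - final_b M SS TT sig tau Y eps w)\<^sup>2 \<partial>M) \<le> eps\<^sup>2"
proof -
  have P: "prob_space M" and sigm: "sig \<in> M \<rightarrow>\<^sub>M SS" and taum: "tau \<in> M \<rightarrow>\<^sub>M TT"
    and Ym: "Y \<in> borel_measurable M" and Yb: "\<forall>w\<in>space M. 0 \<le> Y w \<and> Y w \<le> 1"
    using assms(1) unfolding info_structure_def by auto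
  have eps: "eps > 0" by (rule assms(3))
  have RS: "\<And>S T. S \<in> sets SS \<Longrightarrow> T \<in> sets TT \<Longrightarrow> measure M (rect_event M sig tau S T) > 0 \<Longrightarrow>
       condE M (rect_event M sig tau S T) (\<lambda>w. (Y w - mu_St M TT sig tau Y S w)\<^sup>2)
             - condE M (rect_event M sig tau S T) (\<lambda>w. (Y w - mu_st M SS TT sig tau Y w)\<^sup>2)
           \<le> condE M (rect_event M sig tau S T) (\<lambda>w. (Y w - mu_ST M sig tau Y S T)\<^sup>2)
             - condE M (rect_event M sig tau S T) (\<lambda>w. (Y w - mu_sT M SS sig tau Y T w)\<^sup>2)"
    using assms(2) unfolding rectangle_substitutes_def Let_def by blast
  have sigS: "sig w \<in> space SS" if "w \<in> space M" for w using sigm that by (simp add: measurable_space)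
  have tauS: "tau w \<in> space TT" if "w \<in> space M" for w using taum that by (simp add: measurable_space)
  define Fst where "Fst = vimage_algebra (space M) (\<lambda>w. (sig w, tau w)) (SS \<Otimes>\<^sub>M TT)"
  define Fs where "Fs = vimage_algebra (space M) sig SS"
  define Ft where "Ft = vimage_algebra (space M) tau TT"
  have spFst: "space Fst = space M" and spFs: "space Fs = space M" and spFt: "space Ft = space M"
    unfolding Fst_def Fs_def Ft_def by simp_all
  have pairM: "(\<lambda>w. (sig w, tau w)) \<in> M \<rightarrow>\<^sub>M SS \<Otimes>\<^sub>M TT" using sigm taum by measurable
  have Fst: "subalgebra M Fst" unfolding Fst_def by (rule subalg_vimage[OF pairM])
  have Fs: "subalgebra M Fs" unfolding Fs_def by (rule subalg_vimage[OF sigm])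
  have Ft: "subalgebra M Ft" unfolding Ft_def by (rule subalg_vimage[OF taum])
  have pairFst: "(\<lambda>w. (sig w, tau w)) \<in> Fst \<rightarrow>\<^sub>M SS \<Otimes>\<^sub>M TT"
    unfolding Fst_def by (rule measurable_vimage_algebra1) (auto simp: sigS tauS space_pair_measure)
  have sigFst: "sig \<in> Fst \<rightarrow>\<^sub>M SS" using measurable_compose[OF pairFst measurable_fst] by simp
  have tauFst: "tau \<in> Fst \<rightarrow>\<^sub>M TT" using measurable_compose[OF pairFst measurable_snd] by simp
  have sigFs: "sig \<in> Fs \<rightarrow>\<^sub>M SS"
    unfolding Fs_def by (rule measurable_vimage_algebra1) (auto simp: sigS)
  have tauFt: "tau \<in> Ft \<rightarrow>\<^sub>M TT"
    unfolding Ft_def by (rule measurable_vimage_algebra1) (auto simp: tauS)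
  have FstFs: "subalgebra Fst Fs" unfolding Fs_def by (rule subalg_vimage2[OF sigFst spFst])
  have FstFt: "subalgebra Fst Ft" unfolding Ft_def by (rule subalg_vimage2[OF tauFst spFst])
  define mA where "mA = msgA M SS sig Y eps"
  define mB where "mB = msgB M TT tau Y eps"
  have mAdef: "mA = (\<lambda>w. round_to eps (real_cond_exp M Fs Y w))"
    unfolding mA_def msgA_def mu_s_def gen1_def Fs_def ..
  have mBdef: "mB = (\<lambda>w. round_to eps (real_cond_exp M Ft Y w))"
    unfolding mB_def msgB_def mu_t_def gen1_def Ft_def ..
  have mAFs: "mA \<in> borel_measurable Fs" unfolding mAdef by measurable
  have mBFt: "mB \<in> borel_measurable Ft" unfolding mBdef by measurable
  have mAFst: "mA \<in> borel_measurable Fst" by (rule measurable_from_subalg[OF FstFs mAFs])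
  have mBFst: "mB \<in> borel_measurable Fst" by (rule measurable_from_subalg[OF FstFt mBFt])
  have mAM: "mA \<in> borel_measurable M" by (rule measurable_from_subalg[OF Fs mAFs])
  have mBM: "mB \<in> borel_measurable M" by (rule measurable_from_subalg[OF Ft mBFt])
  define RR where "RR = (\<lambda>k. eps * of_int k) ` {0..round (1/eps)}"
  have RRf: "finite RR" unfolding RR_def by simp
  have mAR: "AE w in M. mA w \<in> RR"
    using ce_bdd[OF P Fs Ym Yb] unfolding mAdef RR_def by eventually_elim (rule round_in[OF eps], auto)
  have mBR: "AE w in M. mB w \<in> RR"
    using ce_bdd[OF P Ft Ym Yb] unfolding mBdef RR_def by eventually_elim (rule round_in[OF eps], auto)
  have mu_st_eq: "mu_st M SS TT sig tau Y = real_cond_exp M Fst Y"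
    unfolding mu_st_def gen2_def Fst_def ..
  have Ybd: "AE w in M. 0 \<le> real_cond_exp M Fst Y w \<and> real_cond_exp M Fst Y w \<le> 1"
    by (rule ce_bdd[OF P Fst Ym Yb])
  define Ga where "Ga = vimage_algebra (space M) (\<lambda>w. (sig w, mB w)) (SS \<Otimes>\<^sub>M borel)"
  have spGa: "space Ga = space M" unfolding Ga_def by simp
  have fa_eq: "final_a M SS TT sig tau Y eps = real_cond_exp M Ga Y"
    unfolding final_a_def gen2_def Ga_def mB_def ..
  have pGaM: "(\<lambda>w. (sig w, mB w)) \<in> M \<rightarrow>\<^sub>M SS \<Otimes>\<^sub>M borel" using sigm mBM by measurable
  have Ga: "subalgebra M Ga" unfolding Ga_def by (rule subalg_vimage[OF pGaM])
  have pGa: "(\<lambda>w. (sig w, mB w)) \<in> Ga \<rightarrow>\<^sub>M SS \<Otimes>\<^sub>M borel"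
    unfolding Ga_def by (rule measurable_vimage_algebra1) (auto simp: sigS space_pair_measure)
  have sigGa: "sig \<in> Ga \<rightarrow>\<^sub>M SS" using measurable_compose[OF pGa measurable_fst] by simp
  have mBGa: "mB \<in> borel_measurable Ga" using measurable_compose[OF pGa measurable_snd] by simp
  have pGaFst: "(\<lambda>w. (sig w, mB w)) \<in> Fst \<rightarrow>\<^sub>M SS \<Otimes>\<^sub>M borel"
    by (rule measurable_Pair[OF sigFst mBFst])
  have GaFst: "subalgebra Fst Ga" unfolding Ga_def by (rule subalg_vimage2[OF pGaFst spFst])
  obtain Tr where Tr: "\<And>r. Tr r \<in> sets TT \<and> {w\<in>space M. mB w = r} = tau -` Tr r \<inter> space M"
    using cell_set[OF mBFt[unfolded Ft_def] taum] by metis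
  have rectA: "rect_event M sig tau (space SS) (Tr r) = {w\<in>space M. mB w = r}" for r
    using Tr[of r] sigS unfolding rect_event_def by auto
  define HA where "HA = vimage_algebra (space M) (\<lambda>w. (sig w \<in> space SS, tau w)) (count_space UNIV \<Otimes>\<^sub>M TT)"
  have A_eq: "mu_St M TT sig tau Y (space SS) = real_cond_exp M HA Y"
    unfolding mu_St_def gen2_def HA_def ..
  have hA1: "(\<lambda>w. (True, tau w)) \<in> Ft \<rightarrow>\<^sub>M count_space UNIV \<Otimes>\<^sub>M TT" using tauFt by measurable
  have hA: "(\<lambda>w. (sig w \<in> space SS, tau w)) \<in> Ft \<rightarrow>\<^sub>M count_space UNIV \<Otimes>\<^sub>M TT"
    using hA1 by (subst measurable_cong[where g="\<lambda>w. (True, tau w)"]) (auto simp: spFt sigS)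
  have FtHA: "subalgebra Ft HA" unfolding HA_def by (rule subalg_vimage2[OF hA spFt])
  have AFt: "real_cond_exp M HA Y \<in> borel_measurable Ft" by (rule measurable_from_subalg[OF FtHA]) simp
  have Abd: "AE w in M. \<bar>real_cond_exp M HA Y w\<bar> \<le> 1"
    using ce_bdd[OF P subalg_trans[OF Ft FtHA] Ym Yb] by eventually_elim auto
  define Hr where "Hr r = vimage_algebra (space M) (\<lambda>w. (sig w, tau w \<in> Tr r)) (SS \<Otimes>\<^sub>M count_space UNIV)" for r
  have nu_eq: "mu_sT M SS sig tau Y (Tr r) = real_cond_exp M (Hr r) Y" for r
    unfolding mu_sT_def gen2_def Hr_def ..
  have GaHr: "subalgebra Ga (Hr r)" for r
  proof -
    have "(\<lambda>w. mB w = r) \<in> Ga \<rightarrow>\<^sub>M count_space UNIV" using mBGa by measurable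
    then have "(\<lambda>w. (sig w, mB w = r)) \<in> Ga \<rightarrow>\<^sub>M SS \<Otimes>\<^sub>M count_space UNIV"
      using sigGa by (intro measurable_Pair)
    then have "(\<lambda>w. (sig w, tau w \<in> Tr r)) \<in> Ga \<rightarrow>\<^sub>M SS \<Otimes>\<^sub>M count_space UNIV"
      using Tr[of r] by (subst measurable_cong[where g="\<lambda>w. (sig w, mB w = r)"]) (auto simp: spGa)
    then show ?thesis unfolding Hr_def by (rule subalg_vimage2[OF _ spGa])
  qed
  have nuGa: "real_cond_exp M (Hr r) Y \<in> borel_measurable Ga" for r
    by (rule measurable_from_subalg[OF GaHr[of r]]) simp
  have nub: "AE w in M. \<bar>real_cond_exp M (Hr r) Y w\<bar> \<le> 1" for r
    using ce_bdd[OF P subalg_trans[OF Ga GaHr[of r]] Ym Yb] by eventually_elim auto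
  have hypA: "condE M {w\<in>space M. mB w = r} (\<lambda>w. (Y w - real_cond_exp M HA Y w)\<^sup>2)
       - condE M {w\<in>space M. mB w = r} (\<lambda>w. (Y w - real_cond_exp M Fst Y w)\<^sup>2)
       \<le> condE M {w\<in>space M. mB w = r} (\<lambda>w. (Y w - condE M {w\<in>space M. mB w = r} Y)\<^sup>2)
       - condE M {w\<in>space M. mB w = r} (\<lambda>w. (Y w - real_cond_exp M (Hr r) Y w)\<^sup>2)"
    if "r \<in> RR" "measure M {w\<in>space M. mB w = r} > 0" for r
    using RS[OF sets.top[of SS] conjunct1[OF Tr[of r]]] that(2)
    unfolding rectA mu_ST_def A_eq nu_eq mu_st_eq by simp
  have accA: "(\<integral>w. (real_cond_exp M Fst Y w - real_cond_exp M Ga Y w)\<^sup>2 \<partial>M) \<le> eps\<^sup>2 / 4"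
    by (rule side[OF P Ym Yb eps Fst Ft Ga GaFst mBdef mBGa AFt Abd RRf mBR nuGa nub hypA])
  define Gb where "Gb = vimage_algebra (space M) (\<lambda>w. (mA w, tau w)) (borel \<Otimes>\<^sub>M TT)"
  have spGb: "space Gb = space M" unfolding Gb_def by simp
  have fb_eq: "final_b M SS TT sig tau Y eps = real_cond_exp M Gb Y"
    unfolding final_b_def gen2_def Gb_def mA_def ..
  have pGbM: "(\<lambda>w. (mA w, tau w)) \<in> M \<rightarrow>\<^sub>M borel \<Otimes>\<^sub>M TT" using taum mAM by measurable
  have Gb: "subalgebra M Gb" unfolding Gb_def by (rule subalg_vimage[OF pGbM])
  have pGb: "(\<lambda>w. (mA w, tau w)) \<in> Gb \<rightarrow>\<^sub>M borel \<Otimes>\<^sub>M TT"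
    unfolding Gb_def by (rule measurable_vimage_algebra1) (auto simp: tauS space_pair_measure)
  have mAGb: "mA \<in> borel_measurable Gb" using measurable_compose[OF pGb measurable_fst] by simp
  have tauGb: "tau \<in> Gb \<rightarrow>\<^sub>M TT" using measurable_compose[OF pGb measurable_snd] by simp
  have pGbFst: "(\<lambda>w. (mA w, tau w)) \<in> Fst \<rightarrow>\<^sub>M borel \<Otimes>\<^sub>M TT"
    by (rule measurable_Pair[OF mAFst tauFst])
  have GbFst: "subalgebra Fst Gb" unfolding Gb_def by (rule subalg_vimage2[OF pGbFst spFst])
  obtain Sr where Sr: "\<And>r. Sr r \<in> sets SS \<and> {w\<in>space M. mA w = r} = sig -` Sr r \<inter> space M"
    using cell_set[OF mAFs[unfolded Fs_def] sigm] by metis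
  have rectB: "rect_event M sig tau (Sr r) (space TT) = {w\<in>space M. mA w = r}" for r
    using Sr[of r] tauS unfolding rect_event_def by auto
  define HB where "HB = vimage_algebra (space M) (\<lambda>w. (sig w, tau w \<in> space TT)) (SS \<Otimes>\<^sub>M count_space UNIV)"
  have B_eq: "mu_sT M SS sig tau Y (space TT) = real_cond_exp M HB Y"
    unfolding mu_sT_def gen2_def HB_def ..
  have hB1: "(\<lambda>w. (sig w, True)) \<in> Fs \<rightarrow>\<^sub>M SS \<Otimes>\<^sub>M count_space UNIV" using sigFs by measurable
  have hB: "(\<lambda>w. (sig w, tau w \<in> space TT)) \<in> Fs \<rightarrow>\<^sub>M SS \<Otimes>\<^sub>M count_space UNIV"
    using hB1 by (subst measurable_cong[where g="\<lambda>w. (sig w, True)"]) (auto simp: spFs tauS)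
  have FsHB: "subalgebra Fs HB" unfolding HB_def by (rule subalg_vimage2[OF hB spFs])
  have BFs: "real_cond_exp M HB Y \<in> borel_measurable Fs" by (rule measurable_from_subalg[OF FsHB]) simp
  have Bbd: "AE w in M. \<bar>real_cond_exp M HB Y w\<bar> \<le> 1"
    using ce_bdd[OF P subalg_trans[OF Fs FsHB] Ym Yb] by eventually_elim auto
  define Kr where "Kr r = vimage_algebra (space M) (\<lambda>w. (sig w \<in> Sr r, tau w)) (count_space UNIV \<Otimes>\<^sub>M TT)" for r
  have nu2_eq: "mu_St M TT sig tau Y (Sr r) = real_cond_exp M (Kr r) Y" for r
    unfolding mu_St_def gen2_def Kr_def ..
  have GbKr: "subalgebra Gb (Kr r)" for r
  proof -
    have "(\<lambda>w. mA w = r) \<in> Gb \<rightarrow>\<^sub>M count_space UNIV" using mAGb by measurable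
    then have "(\<lambda>w. (mA w = r, tau w)) \<in> Gb \<rightarrow>\<^sub>M count_space UNIV \<Otimes>\<^sub>M TT"
      using tauGb by (intro measurable_Pair)
    then have "(\<lambda>w. (sig w \<in> Sr r, tau w)) \<in> Gb \<rightarrow>\<^sub>M count_space UNIV \<Otimes>\<^sub>M TT"
      using Sr[of r] by (subst measurable_cong[where g="\<lambda>w. (mA w = r, tau w)"]) (auto simp: spGb)
    then show ?thesis unfolding Kr_def by (rule subalg_vimage2[OF _ spGb])
  qed
  have nu2Gb: "real_cond_exp M (Kr r) Y \<in> borel_measurable Gb" for r
    by (rule measurable_from_subalg[OF GbKr[of r]]) simp
  have nu2b: "AE w in M. \<bar>real_cond_exp M (Kr r) Y w\<bar> \<le> 1" for r
    using ce_bdd[OF P subalg_trans[OF Gb GbKr[of r]] Ym Yb] by eventually_elim auto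
  have hypB: "condE M {w\<in>space M. mA w = r} (\<lambda>w. (Y w - real_cond_exp M HB Y w)\<^sup>2)
       - condE M {w\<in>space M. mA w = r} (\<lambda>w. (Y w - real_cond_exp M Fst Y w)\<^sup>2)
       \<le> condE M {w\<in>space M. mA w = r} (\<lambda>w. (Y w - condE M {w\<in>space M. mA w = r} Y)\<^sup>2)
       - condE M {w\<in>space M. mA w = r} (\<lambda>w. (Y w - real_cond_exp M (Kr r) Y w)\<^sup>2)"
    if "r \<in> RR" "measure M {w\<in>space M. mA w = r} > 0" for r
    using RS[OF conjunct1[OF Sr[of r]] sets.top[of TT]] that(2)
    unfolding rectB mu_ST_def B_eq nu2_eq mu_st_eq by simp
  have accB: "(\<integral>w. (real_cond_exp M Fst Y w - real_cond_exp M Gb Y w)\<^sup>2 \<partial>M) \<le> eps\<^sup>2 / 4"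
    by (rule side[OF P Ym Yb eps Fst Fs Gb GbFst mAdef mAGb BFs Bbd RRf mAR nu2Gb nu2b hypB])
  have cb: "real (card RR) \<le> 1 / eps + 2" "card RR \<ge> 1" unfolding RR_def using card_bound[OF eps] by auto
  have lb: "real_of_int \<lceil>log 2 (real (card RR))\<rceil> \<le> log 2 (1 / eps + 2) + 1"
    by (rule log_bound[OF eps cb])
  have comm: "\<exists>RA RB. finite RA \<and> finite RB
        \<and> real (card RA) \<le> 1 / eps + 2 \<and> real (card RB) \<le> 1 / eps + 2
        \<and> (AE w in M. msgA M SS sig Y eps w \<in> RA \<and> msgB M TT tau Y eps w \<in> RB)
        \<and> real_of_int (\<lceil>log 2 (real (card RA))\<rceil> + \<lceil>log 2 (real (card RB))\<rceil>)
            \<le> 2 * log 2 (1 / eps + 2) + 2"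
  proof (intro exI[of _ RR] conjI)
    show "AE w in M. msgA M SS sig Y eps w \<in> RR \<and> msgB M TT tau Y eps w \<in> RR"
      using mAR mBR unfolding mA_def mB_def by eventually_elim auto
  qed (use RRf cb lb in auto)
  define a where "a = real_cond_exp M Ga Y"
  define b where "b = real_cond_exp M Gb Y"
  define \<mu> where "\<mu> = real_cond_exp M Fst Y"
  have aM: "a \<in> borel_measurable M" "b \<in> borel_measurable M" "\<mu> \<in> borel_measurable M"
    unfolding a_def b_def \<mu>_def by simp_all
  have bds: "AE w in M. \<bar>a w - b w\<bar> \<le> 1 \<and> \<bar>\<mu> w - a w\<bar> \<le> 1 \<and> \<bar>\<mu> w - b w\<bar> \<le> 1"
    using ce_bdd[OF P Ga Ym Yb] ce_bdd[OF P Gb Ym Yb] ce_bdd[OF P Fst Ym Yb]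
    unfolding a_def b_def \<mu>_def by eventually_elim auto
  have sq: "\<bar>x\<bar> \<le> 1 \<Longrightarrow> \<bar>x\<^sup>2\<bar> \<le> (1::real)" for x
    using power_mono[of "\<bar>x\<bar>" 1 2] by simp
  have i1: "integrable M (\<lambda>w. (a w - b w)\<^sup>2)"
    apply (rule int_bdd[OF P _, of _ 1]) using aM apply measurable
    using bds by eventually_elim (rule sq, auto)
  have i2: "integrable M (\<lambda>w. 2 * (\<mu> w - a w)\<^sup>2 + 2 * (\<mu> w - b w)\<^sup>2)"
    apply (rule int_bdd[OF P _, of _ 4]) using aM apply measurable
    using bds
  proof eventually_elim
    case (elim w)
    have "\<bar>(\<mu> w - a w)\<^sup>2\<bar> \<le> 1" "\<bar>(\<mu> w - b w)\<^sup>2\<bar> \<le> 1" using sq elim by auto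
    moreover have "0 \<le> (\<mu> w - a w)\<^sup>2" "0 \<le> (\<mu> w - b w)\<^sup>2" by simp_all
    ultimately show ?case by (simp only: abs_le_iff) linarith
  qed
  have i3: "integrable M (\<lambda>w. (\<mu> w - a w)\<^sup>2)"
    apply (rule int_bdd[OF P _, of _ 1]) using aM apply measurable
    using bds by eventually_elim (rule sq, auto)
  have i4: "integrable M (\<lambda>w. (\<mu> w - b w)\<^sup>2)"
    apply (rule int_bdd[OF P _, of _ 1]) using aM apply measurable
    using bds by eventually_elim (rule sq, auto)
  have "(\<integral>w. (a w - b w)\<^sup>2 \<partial>M) \<le> (\<integral>w. 2 * (\<mu> w - a w)\<^sup>2 + 2 * (\<mu> w - b w)\<^sup>2 \<partial>M)"
  proof (rule integral_mono[OF i1 i2])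
    fix w show "(a w - b w)\<^sup>2 \<le> 2 * (\<mu> w - a w)\<^sup>2 + 2 * (\<mu> w - b w)\<^sup>2"
      using sum_squares_ge_zero[of "2*\<mu> w - a w - b w" 0]
      by (simp add: power2_eq_square algebra_simps)
  qed
  also have "\<dots> = 2 * (\<integral>w. (\<mu> w - a w)\<^sup>2 \<partial>M) + 2 * (\<integral>w. (\<mu> w - b w)\<^sup>2 \<partial>M)"
    using i3 i4 by simp
  finally have agr: "(\<integral>w. (a w - b w)\<^sup>2 \<partial>M) \<le> 2 * (\<integral>w. (\<mu> w - a w)\<^sup>2 \<partial>M) + 2 * (\<integral>w. (\<mu> w - b w)\<^sup>2 \<partial>M)" .
  have e2: "0 \<le> eps\<^sup>2" by simp
  show ?thesis
    unfolding fa_eq fb_eq mu_st_eq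
    unfolding a_def[symmetric] b_def[symmetric] \<mu>_def[symmetric]
    apply (intro conjI)
       apply (fact comm)
    using agr accA accB e2 unfolding a_def[symmetric] b_def[symmetric] \<mu>_def[symmetric]
    by linarith+
qed

end
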